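(* Let $PW=\{F\in L^2(\mathbb R):\operatorname{supp}\widehat F\subset[-1/2,1/2]\}$ and $E=\{F\in PW:F(x)=F(-x)\text{ for all }x\}$. There exists $c>0$ such that $$\sum_{n\ge0}|F(n)|^2+\sum_{n<0}\Big|\frac{-1}{2\pi i}F'(n)\Big|^2\ge c\,\|F\|_{L^2(\mathbb R)}^2\quad\text{for all }F\in E.$$
   Context: Functions in $PW$ are of the form $F(\xi)=\int_{-1/2}^{1/2}f(x)e^{-2\pi i\xi x}dx$ with $f\in L^2[-1/2,1/2]$, hence differentiable; $n$ ranges over the integers. *)

theory Defs
  imports "HOL-Analysis.Analysis"
begin

definition L2_half :: "(real \<Rightarrow> complex) \<Rightarrow> bool" where
  "L2_half f \<longleftrightarrow> f \<in> borel_measurable lborel \<and>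
     integrable lborel (\<lambda>x. indicator {-1/2..1/2} x * (cmod (f x))\<^sup>2)"

definition PW :: "(real \<Rightarrow> complex) set" where
  "PW = {F. \<exists>f. L2_half f \<and>
     (\<forall>\<xi>. F \<xi> = (LINT x:{-1/2..1/2}|lborel. f x * exp (- 2 * pi * \<i> * complex_of_real (\<xi> * x))))}"

definition PW_even :: "(real \<Rightarrow> complex) set" where
  "PW_even = {F \<in> PW. \<forall>x. F x = F (- x)}"

end

theory Submission
  imports Defs
begin


abbreviation II :: "real set" where "II \<equiv> {-1/2..1/2}"

definition kern :: "real \<Rightarrow> real \<Rightarrow> complex" where
  "kern \<xi> x = exp (- 2 * pi * \<i> * complex_of_real (\<xi> * x))"

definition ee :: "int \<Rightarrow> real \<Rightarrow> complex" where
  "ee n x = cis (2 * pi * of_int n * x)"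

definition NN :: "(real \<Rightarrow> complex) \<Rightarrow> real" where
  "NN g = (\<integral>x. indicator II x * (cmod (g x))\<^sup>2 \<partial>lborel)"

definition ip :: "(real \<Rightarrow> complex) \<Rightarrow> (real \<Rightarrow> complex) \<Rightarrow> complex" where
  "ip g h = (\<integral>x. (indicator II x :: complex) * (g x * cnj (h x)) \<partial>lborel)"

definition coef :: "(real \<Rightarrow> complex) \<Rightarrow> int \<Rightarrow> complex" where
  "coef g n = (LINT x:II|lborel. g x * kern (of_int n) x)"

lemma kern_cis: "kern \<xi> x = cis (- (2 * pi * \<xi> * x))"
  unfolding kern_def cis_conv_exp by (simp add: algebra_simps)

lemma kern_ee: "kern (of_int n) x = cnj (ee n x)"
  unfolding kern_cis ee_def cis_cnj by (simp add: algebra_simps)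

lemma ee_mult: "ee n x * ee m x = ee (n + m) x"
  unfolding ee_def cis_mult by (simp add: algebra_simps)

lemma ee_cnj: "cnj (ee n x) = ee (- n) x"
  unfolding ee_def cis_cnj by simp

lemma ee_0 [simp]: "ee 0 x = 1"
  by (simp add: ee_def)

lemma norm_ee [simp]: "cmod (ee n x) = 1"
  by (simp add: ee_def)

lemma ee_meas [measurable]: "ee n \<in> borel_measurable borel"
  unfolding ee_def by (intro borel_measurable_continuous_onI continuous_intros)

lemma cnj_meas [measurable]: "f \<in> borel_measurable M \<Longrightarrow> (\<lambda>x. cnj (f x)) \<in> borel_measurable M"
  by (rule borel_measurable_continuous_on[where f=cnj]) (auto intro: continuous_intros)

lemma indII_meas [measurable]: "(\<lambda>x. indicator II x :: complex) \<in> borel_measurable borel"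
  by (intro borel_measurable_indicator) simp

lemma L2_halfD: "L2_half g \<Longrightarrow> g \<in> borel_measurable borel"
  by (simp add: L2_half_def)

lemma integrable_ind_const: "integrable lborel (\<lambda>x. indicator II x * (c::real))"
  by (intro integrable_mult_left integrable_real_indicator) auto

lemma L2_bounded:
  assumes "g \<in> borel_measurable borel" "\<And>x. x \<in> II \<Longrightarrow> cmod (g x) \<le> M"
  shows "L2_half g"
  unfolding L2_half_def
proof (intro conjI)
  show "g \<in> borel_measurable lborel" using assms by simp
  show "integrable lborel (\<lambda>x. indicator II x * (cmod (g x))\<^sup>2)"
  proof (rule Bochner_Integration.integrable_bound[OF integrable_ind_const[of "M\<^sup>2"]])
    show "(\<lambda>x. indicator II x * (cmod (g x))\<^sup>2) \<in> borel_measurable lborel" using assms by simp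
    show "AE x in lborel. norm (indicator II x * (cmod (g x))\<^sup>2) \<le> norm (indicator II x * M\<^sup>2)"
    proof (intro AE_I2)
      fix x show "norm (indicator II x * (cmod (g x))\<^sup>2) \<le> norm (indicator II x * M\<^sup>2)"
      proof (cases "x \<in> II")
        case True
        then have "cmod (g x) \<le> M" using assms by auto
        then have "(cmod (g x))\<^sup>2 \<le> M\<^sup>2" by (simp add: power_mono)
        then show ?thesis using True by simp
      qed simp
    qed
  qed
qed

lemma L2_ee: "L2_half (ee n)"
  by (rule L2_bounded[where M=1]) auto

lemma sq_add_le: "(cmod (a + b))\<^sup>2 \<le> 2 * (cmod a)\<^sup>2 + 2 * (cmod b)\<^sup>2"
proof -
  have "cmod (a + b) \<le> cmod a + cmod b" by (rule norm_triangle_ineq)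
  then have "(cmod (a + b))\<^sup>2 \<le> (cmod a + cmod b)\<^sup>2" by (simp add: power_mono)
  also have "\<dots> \<le> 2 * (cmod a)\<^sup>2 + 2 * (cmod b)\<^sup>2"
  proof -
    have "0 \<le> (cmod a - cmod b)\<^sup>2" by simp
    then show ?thesis unfolding power2_sum power2_diff by linarith
  qed
  finally show ?thesis .
qed

lemma L2_add:
  assumes "L2_half g" "L2_half h" shows "L2_half (\<lambda>x. g x + h x)"
  unfolding L2_half_def
proof (intro conjI)
  have [measurable]: "g \<in> borel_measurable borel" "h \<in> borel_measurable borel" using assms by (auto simp: L2_half_def)
  show "(\<lambda>x. g x + h x) \<in> borel_measurable lborel" by simp
  have int: "integrable lborel (\<lambda>x. 2 * (indicator II x * (cmod (g x))\<^sup>2) + 2 * (indicator II x * (cmod (h x))\<^sup>2))"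
    using assms unfolding L2_half_def by auto
  show "integrable lborel (\<lambda>x. indicator II x * (cmod (g x + h x))\<^sup>2)"
  proof (rule Bochner_Integration.integrable_bound[OF int])
    show "(\<lambda>x. indicator II x * (cmod (g x + h x))\<^sup>2) \<in> borel_measurable lborel" by simp
    show "AE x in lborel. norm (indicator II x * (cmod (g x + h x))\<^sup>2) \<le> norm (2 * (indicator II x * (cmod (g x))\<^sup>2) + 2 * (indicator II x * (cmod (h x))\<^sup>2))"
      using sq_add_le[of "g _" "h _"] by (intro AE_I2) (auto simp: indicator_def)
  qed
qed

lemma L2_scale:
  assumes "L2_half g" shows "L2_half (\<lambda>x. c * g x)"
  unfolding L2_half_def
proof (intro conjI)
  have [measurable]: "g \<in> borel_measurable borel" using assms by (auto simp: L2_half_def)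
  show "(\<lambda>x. c * g x) \<in> borel_measurable lborel" by simp
  have "integrable lborel (\<lambda>x. (cmod c)\<^sup>2 * (indicator II x * (cmod (g x))\<^sup>2))"
    using assms unfolding L2_half_def by auto
  then show "integrable lborel (\<lambda>x. indicator II x * (cmod (c * g x))\<^sup>2)"
    by (simp add: norm_mult power_mult_distrib algebra_simps)
qed

lemma L2_uminus: "L2_half g \<Longrightarrow> L2_half (\<lambda>x. - g x)"
  using L2_scale[of g "-1"] by simp

lemma L2_diff: "L2_half g \<Longrightarrow> L2_half h \<Longrightarrow> L2_half (\<lambda>x. g x - h x)"
  using L2_add[of g "\<lambda>x. - h x"] L2_uminus[of h] by simp

lemma L2_sum: "finite A \<Longrightarrow> (\<And>i. i \<in> A \<Longrightarrow> L2_half (f i)) \<Longrightarrow> L2_half (\<lambda>x. \<Sum>i\<in>A. f i x)"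
proof (induction A rule: finite_induct)
  case empty then show ?case using L2_bounded[of "\<lambda>x. 0" 0] by simp
next
  case (insert a A) then show ?case by (simp add: L2_add)
qed

lemma NN_nonneg: "NN g \<ge> 0"
  unfolding NN_def by (intro integral_nonneg_AE) auto

lemma ip_integrable:
  assumes "L2_half g" "L2_half h"
  shows "integrable lborel (\<lambda>x. (indicator II x :: complex) * (g x * cnj (h x)))"
proof -
  have [measurable]: "g \<in> borel_measurable borel" "h \<in> borel_measurable borel" using assms by (auto simp: L2_half_def)
  have int: "integrable lborel (\<lambda>x. (indicator II x * (cmod (g x))\<^sup>2) + (indicator II x * (cmod (h x))\<^sup>2))"
    using assms unfolding L2_half_def by auto
  show ?thesis
  proof (rule Bochner_Integration.integrable_bound[OF int])
    show "(\<lambda>x. (indicator II x :: complex) * (g x * cnj (h x))) \<in> borel_measurable lborel" by simp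
    show "AE x in lborel. norm ((indicator II x :: complex) * (g x * cnj (h x))) \<le> norm ((indicator II x * (cmod (g x))\<^sup>2) + (indicator II x * (cmod (h x))\<^sup>2))"
    proof (intro AE_I2)
      fix x
      have "cmod (g x) * cmod (h x) \<le> (cmod (g x))\<^sup>2 + (cmod (h x))\<^sup>2"
      proof -
        have "0 \<le> (cmod (g x) - cmod (h x))\<^sup>2" by simp
        moreover have "0 \<le> cmod (g x) * cmod (h x)" by simp
        ultimately show ?thesis unfolding power2_diff by linarith
      qed
      then show "norm ((indicator II x :: complex) * (g x * cnj (h x))) \<le> norm ((indicator II x * (cmod (g x))\<^sup>2) + (indicator II x * (cmod (h x))\<^sup>2))"
        by (auto simp: indicator_def norm_mult)
    qed
  qed
qed



lemma set_int_conv: "(LINT x:A|M. f x) = (\<integral>x. (indicator A x :: complex) * f x \<partial>M)"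
  unfolding set_lebesgue_integral_def
  by (intro Bochner_Integration.integral_cong) (auto simp: indicator_def)

lemma ee_exp: "ee k x = exp (\<i> * complex_of_real (2 * pi * of_int k) * complex_of_real x)"
  unfolding ee_def cis_conv_exp by (simp add: algebra_simps)

lemma int_ee: "(LINT x:II|lborel. ee k x) = (if k = 0 then 1 else 0)"
proof (cases "k = 0")
  case True
  then have "(LINT x:II|lborel. ee k x) = (LINT x:II|lborel. (1::complex))" by simp
  also have "\<dots> = 1" by (subst set_integral_const) auto
  finally show ?thesis using True by simp
next
  case False
  define c where "c = \<i> * complex_of_real (2 * pi * of_int k)"
  have c0: "c \<noteq> 0" using False by (simp add: c_def)
  define G where "G z = exp (c * z) / c" for z
  have dG: "(G has_field_derivative exp (c * z)) (at z)" for z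
    unfolding G_def using c0 by (auto intro!: derivative_eq_intros)
  have eq: "ee k x = exp (c * complex_of_real x)" for x unfolding ee_exp c_def by simp
  have "(LINT x:II|lborel. ee k x) = (LBINT x=ereal (-1/2)..ereal (1/2). ee k x)"
    by (subst interval_integral_Icc) auto
  also have "\<dots> = G (of_real (1/2)) - G (of_real (-1/2))"
  proof (rule interval_integral_FTC_finite)
    show "continuous_on {min (-1/2) (1/2)..max (-1/2) (1/2)} (ee k)"
      unfolding ee_def by (intro continuous_intros)
    fix x :: real
    show "((\<lambda>x. G (of_real x)) has_vector_derivative ee k x) (at x within {min (-1/2) (1/2)..max (-1/2) (1/2)})"
      unfolding eq by (rule has_vector_derivative_real_field[OF dG])
  qed
  also have "\<dots> = 0"
  proof -
    have "exp (c * of_real (1/2)) = exp (c * of_real (-1/2)) * exp (c * 1)"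
      by (simp flip: exp_add add: algebra_simps)
    moreover have "exp (c * 1) = 1"
      unfolding c_def by (simp add: cis_conv_exp[symmetric] mult.commute)
    ultimately show ?thesis unfolding G_def by simp
  qed
  finally show ?thesis using False by simp
qed

lemma ip_ee: "ip (ee n) (ee m) = (if n = m then 1 else 0)"
proof -
  have "ip (ee n) (ee m) = (LINT x:II|lborel. ee (n - m) x)"
    unfolding ip_def set_int_conv ee_cnj ee_mult by simp
  also have "\<dots> = (if n - m = 0 then 1 else 0)" by (rule int_ee)
  finally show ?thesis by simp
qed

lemma coef_ip: "coef g n = ip g (ee n)"
  unfolding coef_def ip_def set_int_conv kern_ee by (simp add: mult.assoc)

lemma ip_cnj: "ip h g = cnj (ip g h)"
proof -
  have "cnj (ip g h) = (\<integral>x. cnj ((indicator II x :: complex) * (g x * cnj (h x))) \<partial>lborel)"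
    unfolding ip_def by (rule Bochner_Integration.integral_cnj[symmetric])
  also have "\<dots> = ip h g" unfolding ip_def
    by (intro Bochner_Integration.integral_cong) (auto simp: indicator_def)
  finally show ?thesis by simp
qed

lemma ip_diff_left:
  assumes "L2_half g1" "L2_half g2" "L2_half h"
  shows "ip (\<lambda>x. g1 x - g2 x) h = ip g1 h - ip g2 h"
proof -
  have "ip (\<lambda>x. g1 x - g2 x) h = (\<integral>x. (indicator II x :: complex) * (g1 x * cnj (h x)) - (indicator II x :: complex) * (g2 x * cnj (h x)) \<partial>lborel)"
    unfolding ip_def by (intro Bochner_Integration.integral_cong) (auto simp: algebra_simps)
  also have "\<dots> = ip g1 h - ip g2 h"
    unfolding ip_def using ip_integrable[OF assms(1,3)] ip_integrable[OF assms(2,3)] by simp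
  finally show ?thesis .
qed

lemma ip_diff_right:
  assumes "L2_half g1" "L2_half g2" "L2_half h"
  shows "ip h (\<lambda>x. g1 x - g2 x) = ip h g1 - ip h g2"
  by (subst (1 2 3) ip_cnj) (simp add: ip_diff_left[OF assms])

lemma ip_sum_right:
  assumes "L2_half h" "finite A"
  shows "ip h (\<lambda>x. \<Sum>n\<in>A. c n * ee n x) = (\<Sum>n\<in>A. cnj (c n) * ip h (ee n))"
proof -
  have "ip h (\<lambda>x. \<Sum>n\<in>A. c n * ee n x) = (\<integral>x. (\<Sum>n\<in>A. cnj (c n) * ((indicator II x :: complex) * (h x * cnj (ee n x)))) \<partial>lborel)"
    unfolding ip_def by (intro Bochner_Integration.integral_cong) (auto simp: sum_distrib_left sum_distrib_right algebra_simps)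
  also have "\<dots> = (\<Sum>n\<in>A. (\<integral>x. cnj (c n) * ((indicator II x :: complex) * (h x * cnj (ee n x))) \<partial>lborel))"
    by (rule Bochner_Integration.integral_sum, rule integrable_mult_right, rule ip_integrable[OF assms(1) L2_ee])
  also have "\<dots> = (\<Sum>n\<in>A. cnj (c n) * ip h (ee n))"
    unfolding ip_def by simp
  finally show ?thesis .
qed

lemma mult_cnj_sq: "z * cnj z = (complex_of_real (cmod z))\<^sup>2"
  using complex_norm_square[of z] by simp

lemma NN_ip: assumes "L2_half g" shows "NN g = Re (ip g g)"
proof -
  have "ip g g = (\<integral>x. complex_of_real (indicator II x * (cmod (g x))\<^sup>2) \<partial>lborel)"
    unfolding ip_def
    by (intro Bochner_Integration.integral_cong) (auto simp: indicator_def mult_cnj_sq)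
  also have "\<dots> = complex_of_real (NN g)" unfolding NN_def by (rule integral_complex_of_real)
  finally show ?thesis by simp
qed

lemma cmod_diff_sq: "(cmod (a - b))\<^sup>2 = (cmod a)\<^sup>2 - 2 * Re (cnj b * a) + (cmod b)\<^sup>2"
  unfolding cmod_power2 by (simp add: power2_eq_square algebra_simps)

lemma best_approx:
  assumes g: "L2_half g" and A: "finite A"
  shows "NN (\<lambda>x. g x - (\<Sum>n\<in>A. c n * ee n x)) =
     NN g - (\<Sum>n\<in>A. (cmod (coef g n))\<^sup>2) + (\<Sum>n\<in>A. (cmod (coef g n - c n))\<^sup>2)"
proof -
  define p where "p x = (\<Sum>n\<in>A. c n * ee n x)" for x
  have Lp: "L2_half p" unfolding p_def using A by (intro L2_sum L2_scale L2_ee)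
  have Lgp: "L2_half (\<lambda>x. g x - p x)" by (rule L2_diff[OF g Lp])
  have gp: "ip g p = (\<Sum>n\<in>A. cnj (c n) * coef g n)"
    unfolding p_def using ip_sum_right[OF g A] by (simp add: coef_ip)
  have pp: "ip p p = (\<Sum>n\<in>A. complex_of_real ((cmod (c n))\<^sup>2))"
  proof -
    have pe: "p = (\<lambda>x. \<Sum>n\<in>A. c n * ee n x)" by (simp add: p_def fun_eq_iff)
    have "ip p p = (\<Sum>m\<in>A. cnj (c m) * ip p (ee m))"
      by (subst (2) pe) (rule ip_sum_right[OF Lp A])
    also have "\<dots> = (\<Sum>m\<in>A. cnj (c m) * c m)"
    proof (intro sum.cong refl)
      fix m assume m: "m \<in> A"
      have "ip p (ee m) = cnj (ip (ee m) p)" by (rule ip_cnj)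
      also have "ip (ee m) p = (\<Sum>n\<in>A. cnj (c n) * ip (ee m) (ee n))"
        unfolding p_def by (rule ip_sum_right[OF L2_ee A])
      also have "\<dots> = (\<Sum>n\<in>A. (if n = m then cnj (c m) else 0))"
        by (intro sum.cong refl) (auto simp: ip_ee)
      also have "\<dots> = cnj (c m)" using m A by simp
      finally show "cnj (c m) * ip p (ee m) = cnj (c m) * c m" by simp
    qed
    also have "\<dots> = (\<Sum>n\<in>A. complex_of_real ((cmod (c n))\<^sup>2))"
      by (intro sum.cong refl) (simp add: mult_cnj_sq mult.commute)
    finally show ?thesis .
  qed
  have "ip (\<lambda>x. g x - p x) (\<lambda>x. g x - p x) = ip g g - ip g p - (ip p g - ip p p)"
    by (simp add: ip_diff_left[OF g Lp Lgp] ip_diff_right[OF g Lp g] ip_diff_right[OF g Lp Lp])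
  then have "NN (\<lambda>x. g x - p x) = Re (ip g g) - Re (ip g p) - Re (ip p g) + Re (ip p p)"
    using NN_ip[OF Lgp] by simp
  also have "Re (ip p g) = Re (ip g p)" by (subst ip_cnj) simp
  finally have "NN (\<lambda>x. g x - p x) = NN g - 2 * (\<Sum>n\<in>A. Re (cnj (c n) * coef g n)) + (\<Sum>n\<in>A. (cmod (c n))\<^sup>2)"
    using NN_ip[OF g] gp pp by (simp add: Re_sum)
  also have "\<dots> = NN g - (\<Sum>n\<in>A. (cmod (coef g n))\<^sup>2) + (\<Sum>n\<in>A. (cmod (coef g n - c n))\<^sup>2)"
    unfolding cmod_diff_sq by (simp add: sum.distrib sum_subtractf sum_distrib_left)
  finally show ?thesis unfolding p_def .
qed

lemma bessel:
  assumes g: "L2_half g" and A: "finite A"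
  shows "(\<Sum>n\<in>A. (cmod (coef g n))\<^sup>2) \<le> NN g"
  using best_approx[OF g A, of "coef g"] NN_nonneg[of "\<lambda>x. g x - (\<Sum>n\<in>A. coef g n * ee n x)"] by simp



inductive trigpoly :: "(real \<Rightarrow> complex) \<Rightarrow> bool" where
  tp_base: "trigpoly (\<lambda>x. c * ee n x)"
| tp_add: "trigpoly f \<Longrightarrow> trigpoly g \<Longrightarrow> trigpoly (\<lambda>x. f x + g x)"

lemma trigpoly_sum_form:
  assumes "trigpoly p" shows "\<exists>A c. finite A \<and> p = (\<lambda>x. \<Sum>n\<in>A. c n * ee n x)"
  using assms
proof (induction rule: trigpoly.induct)
  case (tp_base c n)
  show ?case by (rule exI[of _ "{n}"], rule exI[of _ "\<lambda>_. c"]) simp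
next
  case (tp_add f g)
  then obtain A a B b where AB: "finite A" "f = (\<lambda>x. \<Sum>n\<in>A. a n * ee n x)" "finite B" "g = (\<lambda>x. \<Sum>n\<in>B. b n * ee n x)"
    by blast
  define d where "d n = (if n \<in> A then a n else 0) + (if n \<in> B then b n else 0)" for n
  have "(\<lambda>x. f x + g x) = (\<lambda>x. \<Sum>n\<in>A \<union> B. d n * ee n x)"
  proof
    fix x
    have "(\<Sum>n\<in>A \<union> B. d n * ee n x) = (\<Sum>n\<in>A \<union> B. (if n \<in> A then a n * ee n x else 0)) + (\<Sum>n\<in>A \<union> B. (if n \<in> B then b n * ee n x else 0))"
      unfolding d_def sum.distrib[symmetric] by (intro sum.cong refl) (auto simp: algebra_simps)
    also have "(\<Sum>n\<in>A \<union> B. (if n \<in> A then a n * ee n x else 0)) = (\<Sum>n\<in>A. a n * ee n x)"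
      using AB by (simp add: sum.If_cases Int_absorb1)
    also have "(\<Sum>n\<in>A \<union> B. (if n \<in> B then b n * ee n x else 0)) = (\<Sum>n\<in>B. b n * ee n x)"
      using AB by (simp add: sum.If_cases Int_absorb2)
    finally show "f x + g x = (\<Sum>n\<in>A \<union> B. d n * ee n x)" using AB by simp
  qed
  then show ?case using AB by blast
qed

lemma trigpoly_L2: "trigpoly p \<Longrightarrow> L2_half p"
  by (induction rule: trigpoly.induct) (auto intro: L2_add L2_scale L2_ee)

lemma trigpoly_const: "trigpoly (\<lambda>x. c)"
  using tp_base[of c 0] by simp

lemma trigpoly_scale: "trigpoly p \<Longrightarrow> trigpoly (\<lambda>x. c * p x)"
proof (induction rule: trigpoly.induct)
  case (tp_base d n) then show ?case using trigpoly.tp_base[of "c * d" n] by (simp add: mult.assoc)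
next
  case (tp_add f g) then show ?case using trigpoly.tp_add[of "\<lambda>x. c * f x" "\<lambda>x. c * g x"] by (simp add: distrib_left)
qed

lemma trigpoly_neg: "trigpoly p \<Longrightarrow> trigpoly (\<lambda>x. - p x)"
  using trigpoly_scale[of p "-1"] by simp

lemma trigpoly_diff: "trigpoly p \<Longrightarrow> trigpoly q \<Longrightarrow> trigpoly (\<lambda>x. p x - q x)"
  using tp_add[of p "\<lambda>x. - q x"] trigpoly_neg[of q] by simp

lemma trigpoly_mult_base: "trigpoly q \<Longrightarrow> trigpoly (\<lambda>x. c * ee n x * q x)"
proof (induction rule: trigpoly.induct)
  case (tp_base d m)
  have "(\<lambda>x. c * ee n x * (d * ee m x)) = (\<lambda>x. (c * d) * ee (n + m) x)"
    by (simp add: fun_eq_iff ee_mult[symmetric] algebra_simps)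
  then show ?case using trigpoly.tp_base[of "c * d" "n + m"] by simp
next
  case (tp_add f g) then show ?case using trigpoly.tp_add[of "\<lambda>x. c * ee n x * f x" "\<lambda>x. c * ee n x * g x"] by (simp add: distrib_left)
qed

lemma trigpoly_mult: "trigpoly p \<Longrightarrow> trigpoly q \<Longrightarrow> trigpoly (\<lambda>x. p x * q x)"
proof (induction rule: trigpoly.induct)
  case (tp_base c n) then show ?case by (rule trigpoly_mult_base)
next
  case (tp_add f g) then show ?case using trigpoly.tp_add[of "\<lambda>x. f x * q x" "\<lambda>x. g x * q x"] by (simp add: distrib_right)
qed

lemma trigpoly_cnj: "trigpoly p \<Longrightarrow> trigpoly (\<lambda>x. cnj (p x))"
proof (induction rule: trigpoly.induct)
  case (tp_base c n) then show ?case using trigpoly.tp_base[of "cnj c" "- n"] by (simp add: ee_cnj)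
next
  case (tp_add f g) then show ?case using trigpoly.tp_add by simp
qed

definition DD :: "(real \<Rightarrow> complex) \<Rightarrow> bool" where
  "DD g \<longleftrightarrow> (\<forall>e>0. \<exists>p. trigpoly p \<and> NN (\<lambda>x. g x - p x) < e)"

lemma NN_add_le:
  assumes "L2_half a" "L2_half b"
  shows "NN (\<lambda>x. a x + b x) \<le> 2 * NN a + 2 * NN b"
proof -
  have ia: "integrable lborel (\<lambda>x. indicator II x * (cmod (a x))\<^sup>2)"
   and ib: "integrable lborel (\<lambda>x. indicator II x * (cmod (b x))\<^sup>2)"
   and iab: "integrable lborel (\<lambda>x. indicator II x * (cmod (a x + b x))\<^sup>2)"
    using assms L2_add[OF assms] unfolding L2_half_def by auto
  have "NN (\<lambda>x. a x + b x) \<le> (\<integral>x. 2 * (indicator II x * (cmod (a x))\<^sup>2) + 2 * (indicator II x * (cmod (b x))\<^sup>2) \<partial>lborel)"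
    unfolding NN_def
    by (rule integral_mono[OF iab]) (use ia ib sq_add_le in \<open>auto simp: indicator_def\<close>)
  also have "\<dots> = 2 * NN a + 2 * NN b" unfolding NN_def using ia ib by simp
  finally show ?thesis .
qed

lemma NN_scale: "NN (\<lambda>x. c * g x) = (cmod c)\<^sup>2 * NN g"
  unfolding NN_def by (simp add: norm_mult power_mult_distrib algebra_simps)

lemma NN_zero: "NN (\<lambda>x. 0) = 0"
  unfolding NN_def by simp

lemma DD_approx:
  assumes g: "L2_half g" and h: "\<And>e. e > 0 \<Longrightarrow> \<exists>h. L2_half h \<and> DD h \<and> NN (\<lambda>x. g x - h x) < e"
  shows "DD g"
  unfolding DD_def
proof (intro allI impI)
  fix e :: real assume e: "e > 0"
  obtain h where h1: "L2_half h" "DD h" "NN (\<lambda>x. g x - h x) < e / 4" using h[of "e/4"] e by auto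
  obtain p where p: "trigpoly p" "NN (\<lambda>x. h x - p x) < e / 4" using h1(2) e unfolding DD_def by (meson zero_less_divide_iff zero_less_numeral)
  have Lp: "L2_half p" by (rule trigpoly_L2[OF p(1)])
  have "NN (\<lambda>x. g x - p x) = NN (\<lambda>x. (g x - h x) + (h x - p x))" by simp
  also have "\<dots> \<le> 2 * NN (\<lambda>x. g x - h x) + 2 * NN (\<lambda>x. h x - p x)"
    by (rule NN_add_le) (auto intro: L2_diff g h1 Lp)
  also have "\<dots> < e" using h1 p by simp
  finally show "\<exists>p. trigpoly p \<and> NN (\<lambda>x. g x - p x) < e" using p by blast
qed

lemma DD_trig: "trigpoly p \<Longrightarrow> DD p"
  unfolding DD_def by (auto simp: NN_zero)

lemma DD_add:
  assumes "L2_half g1" "L2_half g2" "DD g1" "DD g2"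
  shows "DD (\<lambda>x. g1 x + g2 x)"
  unfolding DD_def
proof (intro allI impI)
  fix e :: real assume e: "e > 0"
  obtain p1 where p1: "trigpoly p1" "NN (\<lambda>x. g1 x - p1 x) < e / 4" using assms(3) e unfolding DD_def by (meson zero_less_divide_iff zero_less_numeral)
  obtain p2 where p2: "trigpoly p2" "NN (\<lambda>x. g2 x - p2 x) < e / 4" using assms(4) e unfolding DD_def by (meson zero_less_divide_iff zero_less_numeral)
  have "NN (\<lambda>x. (g1 x + g2 x) - (p1 x + p2 x)) = NN (\<lambda>x. (g1 x - p1 x) + (g2 x - p2 x))" by (simp add: algebra_simps)
  also have "\<dots> \<le> 2 * NN (\<lambda>x. g1 x - p1 x) + 2 * NN (\<lambda>x. g2 x - p2 x)"
    by (rule NN_add_le) (auto intro: L2_diff assms trigpoly_L2 p1 p2)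
  also have "\<dots> < e" using p1 p2 by simp
  finally show "\<exists>p. trigpoly p \<and> NN (\<lambda>x. (g1 x + g2 x) - p x) < e" using p1 p2 tp_add by blast
qed

lemma DD_scale:
  assumes "DD g" shows "DD (\<lambda>x. c * g x)"
  unfolding DD_def
proof (intro allI impI)
  fix e :: real assume e: "e > 0"
  show "\<exists>p. trigpoly p \<and> NN (\<lambda>x. c * g x - p x) < e"
  proof (cases "c = 0")
    case True then show ?thesis using e trigpoly_const[of 0] by (auto simp: NN_zero)
  next
    case False
    then have c: "(cmod c)\<^sup>2 > 0" by simp
    obtain p where p: "trigpoly p" "NN (\<lambda>x. g x - p x) < e / (cmod c)\<^sup>2" using assms e c unfolding DD_def by (meson divide_pos_pos)
    have "NN (\<lambda>x. c * g x - c * p x) = (cmod c)\<^sup>2 * NN (\<lambda>x. g x - p x)"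
      using NN_scale[of c "\<lambda>x. g x - p x"] by (simp add: algebra_simps)
    also have "\<dots> < e" using p c by (simp add: field_simps)
    finally show ?thesis using p trigpoly_scale by blast
  qed
qed

lemma DD_sum: "finite A \<Longrightarrow> (\<And>i. i \<in> A \<Longrightarrow> L2_half (f i) \<and> DD (f i)) \<Longrightarrow> DD (\<lambda>x. \<Sum>i\<in>A. f i x)"
proof (induction A rule: finite_induct)
  case empty then show ?case using DD_trig[OF trigpoly_const[of 0]] by simp
next
  case (insert a A)
  then show ?case by (simp, intro DD_add L2_sum) auto
qed

lemma DD_limit:
  assumes g: "L2_half g" and s: "\<And>k. L2_half (s k) \<and> DD (s k)"
    and lim: "(\<lambda>k. NN (\<lambda>x. g x - s k x)) \<longlonglongrightarrow> 0"
  shows "DD g"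
proof (rule DD_approx[OF g])
  fix e :: real assume "e > 0"
  then have "eventually (\<lambda>k. NN (\<lambda>x. g x - s k x) < e) sequentially"
    using lim by (rule order_tendstoD(2)[rotated])
  then obtain k where "NN (\<lambda>x. g x - s k x) < e"
    by (meson eventually_sequentially order.refl)
  then show "\<exists>h. L2_half h \<and> DD h \<and> NN (\<lambda>x. g x - h x) < e" using s by blast
qed



inductive Qpoly :: "(complex \<Rightarrow> complex) \<Rightarrow> bool" where
  q_const: "Qpoly (\<lambda>z. c)"
| q_id: "Qpoly (\<lambda>z. z)"
| q_cnj: "Qpoly (\<lambda>z. cnj z)"
| q_add: "Qpoly f \<Longrightarrow> Qpoly g \<Longrightarrow> Qpoly (\<lambda>z. f z + g z)"
| q_mult: "Qpoly f \<Longrightarrow> Qpoly g \<Longrightarrow> Qpoly (\<lambda>z. f z * g z)"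

lemma Qpoly_cnj: "Qpoly q \<Longrightarrow> Qpoly (\<lambda>z. cnj (q z))"
  by (induction rule: Qpoly.induct) (auto intro: Qpoly.intros)

lemma Qpoly_cont: "Qpoly q \<Longrightarrow> continuous_on S q"
  by (induction rule: Qpoly.induct) (auto intro!: continuous_intros)

lemma Qpoly_trig: "Qpoly q \<Longrightarrow> trigpoly (\<lambda>x. q (cis (2 * pi * x)))"
proof (induction rule: Qpoly.induct)
  case (q_const c) then show ?case by (rule trigpoly_const)
next
  case q_id
  then show ?case using tp_base[of 1 1] by (simp add: ee_def)
next
  case q_cnj
  then show ?case using tp_base[of 1 "-1"] by (simp add: ee_def cis_cnj)
next
  case (q_add f g) show ?case by (rule tp_add[OF q_add.IH])
next
  case (q_mult f g) show ?case by (rule trigpoly_mult[OF q_mult.IH])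
qed

lemma Re_cos_Arg: "cmod z = 1 \<Longrightarrow> Re z = cos (Arg z)"
proof -
  assume "cmod z = 1"
  then have "exp (\<i> * complex_of_real (Arg z)) = z" using complex_norm_eq_1_exp_eq by blast
  then have "Re z = Re (exp (\<i> * complex_of_real (Arg z)))" by simp
  also have "\<dots> = cos (Arg z)" by (simp add: Re_exp)
  finally show ?thesis .
qed

lemma trig_uniform:
  fixes h :: "real \<Rightarrow> real"
  assumes cont: "continuous_on II h" and d: "d > 0"
    and van: "\<And>x. x \<in> II \<Longrightarrow> 1/2 - d \<le> \<bar>x\<bar> \<Longrightarrow> h x = 0"
    and e: "e > 0"
  shows "\<exists>p. trigpoly p \<and> (\<forall>x\<in>II. cmod (complex_of_real (h x) - p x) < e)"
proof -
  define \<delta> where "\<delta> = min d (1/4)"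
  have \<delta>: "\<delta> > 0" "\<delta> \<le> 1/4" using d by (auto simp: \<delta>_def)
  have van': "h x = 0" if "x \<in> II" "1/2 - \<delta> \<le> \<bar>x\<bar>" for x
    using van[OF that(1)] that(2) by (auto simp: \<delta>_def)
  define S where "S = sphere (0::complex) 1"
  define H where "H z = h (Arg z / (2 * pi))" for z
  have ArgII: "Arg z / (2 * pi) \<in> II" for z
    using mpi_less_Arg[of z] Arg_le_pi[of z] by (auto simp: field_simps)
  have H0: "H z = 0" if "z \<in> S" "Re z + 1 \<le> 1 - cos (2 * pi * \<delta>)" for z
  proof (rule ccontr)
    assume nz: "H z \<noteq> 0"
    have "\<bar>Arg z / (2 * pi)\<bar> < 1/2 - \<delta>"
      using van'[OF ArgII[of z]] nz unfolding H_def by force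
    then have a: "\<bar>Arg z\<bar> < pi - 2 * pi * \<delta>"
      by (simp add: abs_divide field_simps)
    have "cos (pi - 2 * pi * \<delta>) < cos \<bar>Arg z\<bar>"
      by (rule cos_monotone_0_pi) (use a \<delta> in auto)
    then have "- cos (2 * pi * \<delta>) < cos (Arg z)" by simp
    moreover have "Re z = cos (Arg z)" using that(1) by (intro Re_cos_Arg) (simp add: S_def)
    ultimately show False using that(2) by simp
  qed
  have Hc: "continuous_on S H"
  proof (unfold continuous_on_eq_continuous_within, intro ballI)
    fix z assume z: "z \<in> S"
    show "continuous (at z within S) H"
    proof (cases "z \<in> \<real>\<^sub>\<le>\<^sub>0")
      case False
      have c1: "continuous (at z within S) (\<lambda>z. Arg z / (2 * pi))"
        by (intro continuous_intros continuous_within_Arg False) simp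
      have "continuous (at (Arg z / (2 * pi)) within II) h"
        using cont ArgII[of z] continuous_on_eq_continuous_within by blast
      then have c2: "continuous (at (Arg z / (2 * pi)) within (\<lambda>z. Arg z / (2 * pi)) ` S) h"
        by (rule continuous_within_subset) (use ArgII in auto)
      show ?thesis unfolding H_def by (rule continuous_within_compose2[OF c1 c2])
    next
      case True
      then obtain r where r: "z = of_real r" "r \<le> 0" by (rule nonpos_Reals_cases)
      with z have "z = -1" by (auto simp: S_def)
      have c: "cos (2 * pi * \<delta>) < 1"
      proof -
        have "cos (2 * pi * \<delta>) < cos 0" by (rule cos_monotone_0_pi) (use \<delta> in auto)
        then show ?thesis by simp
      qed
      have Hz: "H z = 0" by (rule H0[OF z]) (use \<open>z = -1\<close> c in auto)
      show ?thesis unfolding continuous_within_eps_delta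
      proof (intro allI impI)
        fix \<epsilon> :: real assume "\<epsilon> > 0"
        show "\<exists>\<delta>'>0. \<forall>x'\<in>S. dist x' z < \<delta>' \<longrightarrow> dist (H x') (H z) < \<epsilon>"
        proof (intro exI[of _ "1 - cos (2 * pi * \<delta>)"] conjI ballI impI)
          show "1 - cos (2 * pi * \<delta>) > 0" using c by simp
          fix x' assume x': "x' \<in> S" "dist x' z < 1 - cos (2 * pi * \<delta>)"
          have "Re x' + 1 \<le> cmod (x' + 1)"
            by (metis abs_ge_self complex_Re_le_cmod order_trans plus_complex.sel(1) one_complex.sel(1))
          also have "\<dots> = dist x' z" using \<open>z = -1\<close> by (simp add: dist_norm)
          finally have "H x' = 0" using x' by (intro H0) auto
          then show "dist (H x') (H z) < \<epsilon>" using Hz \<open>\<epsilon> > 0\<close> by simp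
        qed
      qed
    qed
  qed
  have "\<exists>g. (\<lambda>g. \<exists>q. Qpoly q \<and> g = (\<lambda>z. Re (q z))) g \<and> (\<forall>x\<in>S. \<bar>H x - g x\<bar> < e)"
  proof (rule Stone_Weierstrass_HOL[of S])
    show "compact S" by (simp add: S_def)
    show "\<exists>q. Qpoly q \<and> (\<lambda>x. c) = (\<lambda>z. Re (q z))" for c :: real
      by (intro exI[of _ "\<lambda>z. complex_of_real c"]) (auto intro: q_const)
    show "continuous_on S f" if "\<exists>q. Qpoly q \<and> f = (\<lambda>z. Re (q z))" for f
      using that by (auto intro!: continuous_intros Qpoly_cont)
    show "\<exists>q. Qpoly q \<and> (\<lambda>x. f x + g x) = (\<lambda>z. Re (q z))"
      if "(\<exists>q. Qpoly q \<and> f = (\<lambda>z. Re (q z))) \<and> (\<exists>q. Qpoly q \<and> g = (\<lambda>z. Re (q z)))" for f g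
    proof -
      from that obtain q1 q2 where "Qpoly q1" "f = (\<lambda>z. Re (q1 z))" "Qpoly q2" "g = (\<lambda>z. Re (q2 z))" by blast
      then show ?thesis by (intro exI[of _ "\<lambda>z. q1 z + q2 z"]) (auto intro: q_add)
    qed
    show "\<exists>q. Qpoly q \<and> (\<lambda>x. f x * g x) = (\<lambda>z. Re (q z))"
      if "(\<exists>q. Qpoly q \<and> f = (\<lambda>z. Re (q z))) \<and> (\<exists>q. Qpoly q \<and> g = (\<lambda>z. Re (q z)))" for f g
    proof -
      from that obtain q1 q2 where q: "Qpoly q1" "f = (\<lambda>z. Re (q1 z))" "Qpoly q2" "g = (\<lambda>z. Re (q2 z))" by blast
      have "Qpoly (\<lambda>z. q1 z * ((\<lambda>z. complex_of_real (1/2)) z * (q2 z + cnj (q2 z))))"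
        by (intro q_mult q_add q_const Qpoly_cnj q)
      moreover have "(\<lambda>x. f x * g x) = (\<lambda>z. Re (q1 z * (complex_of_real (1/2) * (q2 z + cnj (q2 z)))))"
        using q by (auto simp: fun_eq_iff complex_add_cnj)
      ultimately show ?thesis by auto
    qed
    show "\<exists>f. (\<exists>q. Qpoly q \<and> f = (\<lambda>z. Re (q z))) \<and> f x \<noteq> f y" if "x \<in> S \<and> y \<in> S \<and> x \<noteq> y" for x y
    proof (cases "Re x = Re y")
      case False then show ?thesis by (intro exI[of _ "\<lambda>z. Re z"]) (auto intro!: exI[of _ "\<lambda>z. z"] q_id)
    next
      case True
      then have "Im x \<noteq> Im y" using that complex_eqI by blast
      moreover have "Qpoly (\<lambda>z. (\<lambda>z. - \<i>) z * z)" by (intro q_mult q_const q_id)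
      ultimately show ?thesis by (intro exI[of _ "\<lambda>z. Re (- \<i> * z)"]) auto
    qed
    show "continuous_on S H" by (rule Hc)
    show "0 < e" by (rule e)
  qed
  then obtain q where q: "Qpoly q" "\<forall>z\<in>S. \<bar>H z - Re (q z)\<bar> < e" by blast
  define p where "p x = complex_of_real (Re (q (cis (2 * pi * x))))" for x
  have "trigpoly (\<lambda>x. (1/2) * (q (cis (2 * pi * x)) + cnj (q (cis (2 * pi * x)))))"
    by (intro trigpoly_scale tp_add Qpoly_trig Qpoly_cnj q)
  moreover have "(\<lambda>x. (1/2) * (q (cis (2 * pi * x)) + cnj (q (cis (2 * pi * x))))) = p"
    by (auto simp: fun_eq_iff p_def complex_add_cnj)
  ultimately have tp: "trigpoly p" by simp
  have "cmod (complex_of_real (h x) - p x) < e" if x: "x \<in> II" for x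
  proof -
    have cS: "cis (2 * pi * x) \<in> S" by (simp add: S_def)
    have "H (cis (2 * pi * x)) = h x"
    proof (cases "x = -1/2")
      case True
      have "cis (2 * pi * x) = -1" using True by (simp add: complex_eq_iff)
      moreover have "Arg (-1) = pi" by (simp add: Arg_eq_pi)
      ultimately have "H (cis (2 * pi * x)) = h (1/2)" by (simp add: H_def)
      also have "\<dots> = 0" by (rule van') (use \<delta> in auto)
      also have "\<dots> = h x" using True by (intro van'[symmetric]) (use \<delta> in auto)
      finally show ?thesis .
    next
      case False
      then have x1: "-1 < 2 * x" "2 * x \<le> 1" using x by auto
      have "pi * (-1) < pi * (2 * x)" by (rule mult_strict_left_mono[OF x1(1)]) simp
      moreover have "pi * (2 * x) \<le> pi * 1" by (rule mult_left_mono[OF x1(2)]) simp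
      ultimately have "2 * pi * x \<in> {-pi<..pi}" by (simp add: algebra_simps)
      then have "Arg (cis (2 * pi * x)) = 2 * pi * x" by (rule Arg_cis)
      then show ?thesis by (simp add: H_def)
    qed
    then have "\<bar>h x - Re (q (cis (2 * pi * x)))\<bar> < e" using q(2) cS by metis
    then show ?thesis unfolding p_def by (simp flip: of_real_diff)
  qed
  then show ?thesis using tp by blast
qed



lemma int_ind_II_const: "(\<integral>x. indicator II x * c \<partial>lborel) = (c::real)"
  by simp

lemma NN_unif:
  assumes "L2_half u" "\<And>x. x \<in> II \<Longrightarrow> cmod (u x) \<le> M"
  shows "NN u \<le> M\<^sup>2"
proof -
  have iu: "integrable lborel (\<lambda>x. indicator II x * (cmod (u x))\<^sup>2)" using assms(1) unfolding L2_half_def by auto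
  have "NN u \<le> (\<integral>x. indicator II x * M\<^sup>2 \<partial>lborel)"
    unfolding NN_def
  proof (rule integral_mono[OF iu integrable_ind_const])
    fix x show "indicator II x * (cmod (u x))\<^sup>2 \<le> indicator II x * M\<^sup>2"
    proof (cases "x \<in> II")
      case True then show ?thesis using assms(2)[OF True] by (simp add: power_mono)
    qed simp
  qed
  also have "\<dots> = M\<^sup>2" by (rule int_ind_II_const)
  finally show ?thesis .
qed

lemma DD_cont:
  fixes h :: "real \<Rightarrow> real"
  assumes cont: "continuous_on UNIV h" and d: "d > 0"
    and van: "\<And>x. x \<in> II \<Longrightarrow> 1/2 - d \<le> \<bar>x\<bar> \<Longrightarrow> h x = 0"
  shows "DD (\<lambda>x. complex_of_real (h x))"
  unfolding DD_def
proof (intro allI impI)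
  fix e :: real assume e: "e > 0"
  have hm: "h \<in> borel_measurable borel" using cont by (rule borel_measurable_continuous_onI)
  have "continuous_on II h" using cont by (rule continuous_on_subset) simp
  from trig_uniform[OF this d van, of "sqrt (e/2)"] e
  obtain p where p: "trigpoly p" "\<And>x. x \<in> II \<Longrightarrow> cmod (complex_of_real (h x) - p x) < sqrt (e/2)" by auto
  have L: "L2_half (\<lambda>x. complex_of_real (h x) - p x)"
  proof (rule L2_diff[OF _ trigpoly_L2[OF p(1)]])
    have "continuous_on II h" using cont by (rule continuous_on_subset) simp
    then obtain M where "\<forall>x\<in>II. norm (h x) \<le> M" using compact_Icc compact_imp_bounded compact_continuous_image
      by (metis bounded_iff image_eqI)
    then show "L2_half (\<lambda>x. complex_of_real (h x))" using hm by (intro L2_bounded[where M=M]) auto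
  qed
  have "NN (\<lambda>x. complex_of_real (h x) - p x) \<le> (sqrt (e/2))\<^sup>2"
    by (rule NN_unif[OF L]) (use p(2) in \<open>auto intro: less_imp_le\<close>)
  also have "\<dots> < e" using e by simp
  finally show "\<exists>p. trigpoly p \<and> NN (\<lambda>x. complex_of_real (h x) - p x) < e" using p(1) by blast
qed

definition trap :: "real \<Rightarrow> real \<Rightarrow> real \<Rightarrow> real" where
  "trap a d x = max 0 (min 1 (min ((x + 1/2) / d - 1) ((a - x) / d - 1)))"

lemma trap_cont: "d \<noteq> 0 \<Longrightarrow> continuous_on UNIV (trap a d)"
  unfolding trap_def by (intro continuous_intros) auto

lemma ind_trap_bound:
  assumes d: "d > 0"
  shows "indicator II x * (cmod ((indicator {..a} x :: complex) - complex_of_real (trap a d x)))\<^sup>2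
     \<le> indicator {-1/2..-1/2 + 2*d} x + indicator {a - 2*d..a} x"
proof -
  have t01: "0 \<le> trap a d x" "trap a d x \<le> 1" unfolding trap_def by auto
  have eq: "(indicator {..a} x :: complex) - complex_of_real (trap a d x) = complex_of_real (indicator {..a} x - trap a d x)"
    by (simp add: indicator_def)
  show ?thesis
  proof (cases "x \<in> II")
    case False
    then have "indicator II x = (0::real)" by simp
    then show ?thesis by simp
  next
    case True
    show ?thesis
    proof (cases "x \<le> a")
      case False
      then have "(a - x) / d - 1 < 0" using d by (simp add: divide_neg_pos)
      then have "trap a d x = 0" unfolding trap_def by linarith
      then show ?thesis using False eq by (simp add: indicator_def)
    next
      case xa: True
      show ?thesis
      proof (cases "-1/2 + 2*d \<le> x \<and> x \<le> a - 2*d")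
        case True
        then have "(x + 1/2) / d \<ge> 2" "(a - x) / d \<ge> 2" using d by (auto simp: field_simps)
        then have "trap a d x = 1" unfolding trap_def by linarith
        then show ?thesis using xa eq by (simp add: indicator_def)
      next
        case False
        have "(cmod ((indicator {..a} x :: complex) - complex_of_real (trap a d x)))\<^sup>2 \<le> 1"
        proof -
          have "(indicator {..a} x :: complex) - complex_of_real (trap a d x) = complex_of_real (1 - trap a d x)"
            using xa by simp
          then have "cmod ((indicator {..a} x :: complex) - complex_of_real (trap a d x)) = \<bar>1 - trap a d x\<bar>"
            by (simp only: norm_of_real)
          moreover have "\<bar>1 - trap a d x\<bar> \<le> 1" using t01 by simp
          ultimately show ?thesis by (simp add: abs_square_le_1)
        qed
        moreover have "(1::real) \<le> indicator {-1/2..-1/2 + 2*d} x + indicator {a - 2*d..a} x"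
          using False True xa by (auto simp: indicator_def)
        ultimately show ?thesis using True by simp
      qed
    qed
  qed
qed

lemma L2_indicator: "A \<in> sets borel \<Longrightarrow> L2_half (\<lambda>x. indicator A x :: complex)"
  by (rule L2_bounded[where M=1]) (auto simp: indicator_def)

lemma DD_atMost: "DD (\<lambda>x. indicator {..a} x :: complex)"
proof (cases "a \<le> 1/2")
  case False
  have "NN (\<lambda>x. (indicator {..a} x :: complex) - 1) = 0"
    unfolding NN_def using False by (intro integral_eq_zero_AE AE_I2) (auto simp: indicator_def)
  then show ?thesis unfolding DD_def using trigpoly_const[of 1] by auto
next
  case True
  show ?thesis
  proof (rule DD_approx[OF L2_indicator])
    fix e :: real assume e: "e > 0"
    define d where "d = e / 8"
    have d: "d > 0" using e by (simp add: d_def)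
    let ?h = "\<lambda>x. complex_of_real (trap a d x)"
    have hm: "trap a d \<in> borel_measurable borel" using trap_cont[of d a] d by (intro borel_measurable_continuous_onI) auto
    have Lh: "L2_half ?h"
      by (rule L2_bounded[where M=1]) (use hm in \<open>auto simp: trap_def\<close>)
    have DDh: "DD ?h"
    proof (rule DD_cont[OF trap_cont d])
      show "d \<noteq> 0" using d by simp
    next
      fix x assume x: "x \<in> II" "1/2 - d \<le> \<bar>x\<bar>"
      show "trap a d x = 0"
      proof (cases "x \<le> 0")
        case True
        then have "(x + 1/2) / d - 1 \<le> 0" using x d by (auto simp: field_simps)
        then show ?thesis unfolding trap_def by linarith
      next
        case False
        then have "(a - x) / d - 1 \<le> 0" using x d \<open>a \<le> 1/2\<close> by (auto simp: field_simps)
        then show ?thesis unfolding trap_def by linarith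
      qed
    qed
    have Ld: "L2_half (\<lambda>x. (indicator {..a} x :: complex) - ?h x)"
      by (intro L2_diff L2_indicator Lh) simp
    have i1: "integrable lborel (\<lambda>x. indicator {-1/2..-1/2 + 2*d} x + indicator {a - 2*d..a} x :: real)"
      by (intro Bochner_Integration.integrable_add integrable_real_indicator) (auto simp: emeasure_lborel_Icc_eq)
    have "NN (\<lambda>x. (indicator {..a} x :: complex) - ?h x) \<le> (\<integral>x. indicator {-1/2..-1/2 + 2*d} x + indicator {a - 2*d..a} x \<partial>lborel)"
      unfolding NN_def
      by (rule integral_mono[OF _ i1 ind_trap_bound[OF d]]) (use Ld in \<open>simp add: L2_half_def\<close>)
    also have "\<dots> = 4 * d"
      using d by (subst Bochner_Integration.integral_add) (auto intro!: integrable_real_indicator simp: emeasure_lborel_Icc_eq)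
    also have "\<dots> < e" using e by (simp add: d_def)
    finally show "\<exists>h. L2_half h \<and> DD h \<and> NN (\<lambda>x. (indicator {..a} x :: complex) - h x) < e"
      using Lh DDh by blast
  qed simp
qed



lemma sets_borel_atMost: "sets (borel :: real measure) = sigma_sets UNIV (range (\<lambda>a. {..a::real}))"
  by (subst borel_eq_atMost) (rule sets_measure_of, simp)

lemma DCT0:
  fixes s :: "nat \<Rightarrow> real \<Rightarrow> real"
  assumes "\<And>i. s i \<in> borel_measurable lborel" "integrable lborel w"
    "AE x in lborel. (\<lambda>i. s i x) \<longlonglongrightarrow> 0" "\<And>i. AE x in lborel. norm (s i x) \<le> w x"
  shows "(\<lambda>i. integral\<^sup>L lborel (s i)) \<longlonglongrightarrow> 0"
proof -
  note X = integral_dominated_convergence[of "\<lambda>x. 0::real" lborel s w]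
  have "(\<lambda>i. integral\<^sup>L lborel (s i)) \<longlonglongrightarrow> integral\<^sup>L lborel (\<lambda>x. 0)"
    using X assms by simp
  then show ?thesis by simp
qed

lemma NN_lim_indicator:
  assumes A: "\<And>i. A i \<in> sets borel"
  shows "(\<lambda>k. NN (\<lambda>x. (indicator (\<Union>i. A i) x :: complex) - indicator (\<Union>i<k. A i) x)) \<longlonglongrightarrow> 0"
proof -
  show ?thesis
    unfolding NN_def
  proof (rule DCT0)
    show "(\<lambda>x. indicator II x * (cmod ((indicator (\<Union>i. A i) x :: complex) - indicator (\<Union>i<k. A i) x))\<^sup>2) \<in> borel_measurable lborel" for k
      using A by measurable
    show "integrable lborel (indicator II :: real \<Rightarrow> real)" by (intro integrable_real_indicator) auto
    show "AE x in lborel. (\<lambda>k. indicator II x * (cmod ((indicator (\<Union>i. A i) x :: complex) - indicator (\<Union>i<k. A i) x))\<^sup>2) \<longlonglongrightarrow> 0"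
    proof (intro AE_I2)
      fix x
      have "(\<lambda>k. (indicator (\<Union>i<k. A i) x :: complex)) \<longlonglongrightarrow> indicator (\<Union>i. A i) x" by (rule LIMSEQ_indicator_UN)
      then have "(\<lambda>k. indicator II x * (cmod ((indicator (\<Union>i. A i) x :: complex) - indicator (\<Union>i<k. A i) x))\<^sup>2) \<longlonglongrightarrow> indicator II x * (cmod ((indicator (\<Union>i. A i) x :: complex) - indicator (\<Union>i. A i) x))\<^sup>2"
        by (intro tendsto_intros)
      then show "(\<lambda>k. indicator II x * (cmod ((indicator (\<Union>i. A i) x :: complex) - indicator (\<Union>i<k. A i) x))\<^sup>2) \<longlonglongrightarrow> 0" by simp
    qed
    show "AE x in lborel. norm (indicator II x * (cmod ((indicator (\<Union>i. A i) x :: complex) - indicator (\<Union>i<k. A i) x))\<^sup>2) \<le> indicator II x" for k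
      by (intro AE_I2) (auto simp: indicator_def)
  qed
qed

lemma DD_borel:
  assumes "A \<in> sets borel"
  shows "DD (\<lambda>x. indicator A x :: complex)"
proof -
  have IS: "Int_stable (range (\<lambda>a. {..a::real}))"
    unfolding Int_stable_def by (auto simp: Int_atMost)
  have cl: "range (\<lambda>a. {..a::real}) \<subseteq> Pow UNIV" by simp
  have "A \<in> sigma_sets UNIV (range (\<lambda>a. {..a::real}))" using assms sets_borel_atMost by simp
  from IS cl this show ?thesis
  proof (induction rule: sigma_sets_induct_disjoint)
    case (basic A) then show ?case using DD_atMost by auto
  next
    case empty then show ?case using DD_trig[OF trigpoly_const[of 0]] by simp
  next
    case (compl A)
    then have Ab: "A \<in> sets borel" using sets_borel_atMost by simp
    have "DD (\<lambda>x. (\<lambda>x. 1) x + (- 1) * (indicator A x :: complex))"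
      by (intro DD_add DD_scale DD_trig trigpoly_const L2_scale L2_indicator Ab compl.IH)
        (rule L2_bounded[where M=1], auto)
    moreover have "(\<lambda>x. (\<lambda>x. 1) x + (- 1) * (indicator A x :: complex)) = (\<lambda>x. indicator (UNIV - A) x)"
      by (auto simp: fun_eq_iff indicator_def)
    ultimately show ?case by simp
  next
    case (union A)
    then have Ab: "\<And>i. A i \<in> sets borel" using sets_borel_atMost by auto
    show ?case
    proof (rule DD_limit[OF L2_indicator _ NN_lim_indicator[of A, OF Ab]])
      show "(\<Union>i. A i) \<in> sets borel" using Ab by auto
      fix k
      have eq: "(\<lambda>x. indicator (\<Union>i<k. A i) x :: complex) = (\<lambda>x. \<Sum>i\<in>{..<k}. indicator (A i) x)"
        using union.hyps(1) by (auto simp: fun_eq_iff intro!: indicator_UN_disjoint disjoint_family_on_mono[of "{..<k}" UNIV])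
      show "L2_half (\<lambda>x. indicator (\<Union>i<k. A i) x :: complex) \<and> DD (\<lambda>x. indicator (\<Union>i<k. A i) x :: complex)"
        using Ab union.IH by (auto simp only: eq intro!: DD_sum L2_sum L2_indicator)
    qed
  qed
qed

lemma DD_simple:
  fixes s :: "real \<Rightarrow> complex"
  assumes s: "simple_function lborel s"
  shows "DD s"
proof -
  have eq: "s = (\<lambda>x. \<Sum>y \<in> s ` UNIV. y * indicator (s -` {y}) x)"
  proof
    fix x
    have "s x = (\<Sum>y \<in> s ` space lborel. indicator (s -` {y} \<inter> space lborel) x *\<^sub>R y)"
      by (rule simple_function_indicator_representation_banach[OF s]) simp
    then show "s x = (\<Sum>y \<in> s ` UNIV. y * indicator (s -` {y}) x)"
    proof -
      assume that: "s x = (\<Sum>y \<in> s ` space lborel. indicator (s -` {y} \<inter> space lborel) x *\<^sub>R y)"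
      have "(\<Sum>y \<in> s ` space lborel. indicator (s -` {y} \<inter> space lborel) x *\<^sub>R y) = (\<Sum>y \<in> s ` UNIV. y * indicator (s -` {y}) x)"
      proof (rule sum.cong)
        show "s ` space lborel = s ` UNIV" by simp
        fix y
        show "indicator (s -` {y} \<inter> space lborel) x *\<^sub>R y = y * indicator (s -` {y}) x"
          by (cases "x \<in> s -` {y}") (simp_all add: indicator_def)
      qed
      with that show ?thesis by (rule trans)
    qed
  qed
  have fin: "finite (s ` UNIV)" using simple_functionD(1)[OF s] by simp
  have meas: "s -` {y} \<in> sets borel" for y
    using simple_functionD(2)[OF s, of "{y}"] by simp
  show ?thesis
    by (subst eq, intro DD_sum fin conjI L2_scale L2_indicator meas DD_scale DD_borel)
qed

lemma L2_dom:
  assumes u: "u \<in> borel_measurable borel" and g: "L2_half g" and b: "\<And>x. cmod (u x) \<le> C * cmod (g x)"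
  shows "L2_half u"
  unfolding L2_half_def
proof (intro conjI)
  show "u \<in> borel_measurable lborel" using u by simp
  have "integrable lborel (\<lambda>x. C\<^sup>2 * (indicator II x * (cmod (g x))\<^sup>2))" using g unfolding L2_half_def by auto
  then show "integrable lborel (\<lambda>x. indicator II x * (cmod (u x))\<^sup>2)"
  proof (rule Bochner_Integration.integrable_bound)
    show "(\<lambda>x. indicator II x * (cmod (u x))\<^sup>2) \<in> borel_measurable lborel" using u by simp
    show "AE x in lborel. norm (indicator II x * (cmod (u x))\<^sup>2) \<le> norm (C\<^sup>2 * (indicator II x * (cmod (g x))\<^sup>2))"
    proof (intro AE_I2)
      fix x
      have "(cmod (u x))\<^sup>2 \<le> (C * cmod (g x))\<^sup>2" using b[of x] by (intro power_mono) auto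
      then show "norm (indicator II x * (cmod (u x))\<^sup>2) \<le> norm (C\<^sup>2 * (indicator II x * (cmod (g x))\<^sup>2))"
        by (auto simp: indicator_def power_mult_distrib)
    qed
  qed
qed

lemma DD_all:
  assumes g: "L2_half g" shows "DD g"
proof -
  have gm [measurable]: "g \<in> borel_measurable lborel" using g unfolding L2_half_def by simp
  obtain F where F: "\<And>i. simple_function lborel (F i)" "\<And>x. (\<lambda>i. F i x) \<longlonglongrightarrow> g x"
      "\<And>i x. dist (F i x) 0 \<le> 2 * dist (g x) 0"
    using borel_measurable_implies_sequence_metric[OF gm, of 0] by auto
  have Fm [measurable]: "F i \<in> borel_measurable borel" for i
    using borel_measurable_simple_function[OF F(1)] by simp
  have LF: "L2_half (F i)" for i
  proof (rule L2_dom[OF Fm g, where C=2])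
    show "cmod (F i x) \<le> 2 * cmod (g x)" for x using F(3)[of i x] by (simp add: dist_norm)
  qed
  show ?thesis
  proof (rule DD_limit[OF g])
    show "L2_half (F k) \<and> DD (F k)" for k using LF DD_simple[OF F(1)] by blast
    show "(\<lambda>k. NN (\<lambda>x. g x - F k x)) \<longlonglongrightarrow> 0"
      unfolding NN_def
    proof (rule DCT0)
      show "(\<lambda>x. indicator II x * (cmod (g x - F k x))\<^sup>2) \<in> borel_measurable lborel" for k by measurable
      show "integrable lborel (\<lambda>x. 9 * (indicator II x * (cmod (g x))\<^sup>2))" using g unfolding L2_half_def by auto
      show "AE x in lborel. (\<lambda>k. indicator II x * (cmod (g x - F k x))\<^sup>2) \<longlonglongrightarrow> 0"
      proof (intro AE_I2)
        fix x
        have "(\<lambda>k. indicator II x * (cmod (g x - F k x))\<^sup>2) \<longlonglongrightarrow> indicator II x * (cmod (g x - g x))\<^sup>2"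
          by (intro tendsto_intros F(2))
        then show "(\<lambda>k. indicator II x * (cmod (g x - F k x))\<^sup>2) \<longlonglongrightarrow> 0" by simp
      qed
      show "AE x in lborel. norm (indicator II x * (cmod (g x - F k x))\<^sup>2) \<le> 9 * (indicator II x * (cmod (g x))\<^sup>2)" for k
      proof (intro AE_I2)
        fix x
        have "cmod (g x - F k x) \<le> cmod (g x) + cmod (F k x)" by (rule norm_triangle_ineq4)
        also have "\<dots> \<le> 3 * cmod (g x)" using F(3)[of k x] by (simp add: dist_norm)
        finally have "(cmod (g x - F k x))\<^sup>2 \<le> (3 * cmod (g x))\<^sup>2" by (intro power_mono) auto
        then show "norm (indicator II x * (cmod (g x - F k x))\<^sup>2) \<le> 9 * (indicator II x * (cmod (g x))\<^sup>2)"
          by (auto simp: indicator_def power_mult_distrib)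
      qed
    qed
  qed
qed



lemma finite_le_infsum:
  fixes a :: "'a \<Rightarrow> ennreal"
  assumes "finite A" "A \<subseteq> B"
  shows "sum a A \<le> infsum a B"
proof -
  have "infsum a B = (SUP F\<in>{F. finite F \<and> F \<subseteq> B}. sum a F)"
    by (rule nonneg_infsum_complete) simp
  moreover have "sum a A \<le> (SUP F\<in>{F. finite F \<and> F \<subseteq> B}. sum a F)"
    using assms by (intro SUP_upper) auto
  ultimately show ?thesis by simp
qed

lemma parseval_le:
  assumes g: "L2_half g"
  shows "ennreal (NN g) \<le> (\<Sum>\<^sub>\<infinity>n\<in>UNIV. ennreal ((cmod (coef g n))\<^sup>2))"
proof (rule ennreal_le_epsilon)
  fix e :: real assume e: "e > 0"
  obtain p where p: "trigpoly p" "NN (\<lambda>x. g x - p x) < e" using DD_all[OF g] e unfolding DD_def by blast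
  obtain A c where A: "finite A" "p = (\<lambda>x. \<Sum>n\<in>A. c n * ee n x)" using trigpoly_sum_form[OF p(1)] by blast
  have "NN g - (\<Sum>n\<in>A. (cmod (coef g n))\<^sup>2) \<le> NN (\<lambda>x. g x - p x)"
    unfolding A(2) best_approx[OF g A(1)] by (simp add: sum_nonneg)
  then have le: "NN g \<le> (\<Sum>n\<in>A. (cmod (coef g n))\<^sup>2) + e" using p(2) by linarith
  have "ennreal (NN g) \<le> ennreal ((\<Sum>n\<in>A. (cmod (coef g n))\<^sup>2) + e)"
    using le by (rule ennreal_leI)
  also have "\<dots> = ennreal (\<Sum>n\<in>A. (cmod (coef g n))\<^sup>2) + ennreal e"
    by (rule ennreal_plus) (use e in \<open>auto intro: sum_nonneg\<close>)
  also have "ennreal (\<Sum>n\<in>A. (cmod (coef g n))\<^sup>2) = (\<Sum>n\<in>A. ennreal ((cmod (coef g n))\<^sup>2))"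
    by (rule sum_ennreal[symmetric]) simp
  also have "\<dots> \<le> (\<Sum>\<^sub>\<infinity>n\<in>UNIV. ennreal ((cmod (coef g n))\<^sup>2))"
    by (rule finite_le_infsum) (use A in auto)
  finally show "ennreal (NN g) \<le> (\<Sum>\<^sub>\<infinity>n\<in>UNIV. ennreal ((cmod (coef g n))\<^sup>2)) + ennreal e"
    by (simp add: add_right_mono)
qed

lemma kern_meas [measurable]: "kern \<xi> \<in> borel_measurable borel"
  unfolding kern_def by (intro borel_measurable_continuous_onI continuous_intros)

lemma kern_pair_meas: "(\<lambda>p. kern (fst p) (snd p)) \<in> borel_measurable (borel \<Otimes>\<^sub>M lborel)"
proof -
  have m: "(\<lambda>p::real \<times> real. kern (fst p) (snd p)) \<in> borel_measurable borel"
    unfolding kern_def by (intro borel_measurable_continuous_onI continuous_intros)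
  have eq: "sets (borel \<Otimes>\<^sub>M lborel) = sets (borel :: (real \<times> real) measure)"
  proof -
    have "sets (borel \<Otimes>\<^sub>M lborel) = sets (borel \<Otimes>\<^sub>M (borel :: real measure))"
      by (rule sets_pair_measure_cong) simp_all
    also have "\<dots> = sets (borel :: (real \<times> real) measure)" by (simp only: borel_prod)
    finally show ?thesis .
  qed
  show ?thesis by (subst measurable_cong_sets[OF eq refl]) (rule m)
qed

lemma norm_kern [simp]: "cmod (kern \<xi> x) = 1"
  by (simp add: kern_cis)

lemma kern_add: "kern (a + b) x = kern b x * kern a x"
  unfolding kern_cis cis_mult by (simp add: algebra_simps)

lemma F_meas:
  assumes f: "L2_half f"
  shows "(\<lambda>\<xi>. LINT x:II|lborel. f x * kern \<xi> x) \<in> borel_measurable borel"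
proof -
  have fm: "f \<in> borel_measurable lborel" using f by (simp add: L2_half_def)
  have a: "(\<lambda>p. indicator II (snd p) :: real) \<in> borel_measurable (borel \<Otimes>\<^sub>M lborel)"
    by (rule measurable_compose[OF measurable_snd]) simp
  have b: "(\<lambda>p. f (snd p)) \<in> borel_measurable (borel \<Otimes>\<^sub>M lborel)"
    by (rule measurable_compose[OF measurable_snd fm])
  have "(\<lambda>p. indicator II (snd p) *\<^sub>R (f (snd p) * kern (fst p) (snd p))) \<in> borel_measurable (borel \<Otimes>\<^sub>M lborel)"
    by (intro borel_measurable_scaleR borel_measurable_times a b kern_pair_meas)
  then have "(\<lambda>(\<xi>, x). indicator II x *\<^sub>R (f x * kern \<xi> x)) \<in> borel_measurable (borel \<Otimes>\<^sub>M lborel)"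
    by (simp add: case_prod_beta')
  then have "(\<lambda>\<xi>. \<integral>x. indicator II x *\<^sub>R (f x * kern \<xi> x) \<partial>lborel) \<in> borel_measurable borel"
    by (rule lborel.borel_measurable_lebesgue_integral[where f="\<lambda>\<xi> x. indicator II x *\<^sub>R (f x * kern \<xi> x)"])
  then show ?thesis by (simp add: set_lebesgue_integral_def)
qed



lemma indicator_int_decomp:
  fixes K :: nat
  shows "(indicator {- real K..<real K} \<xi> :: ennreal) = (\<Sum>n\<in>{- int K..<int K}. indicator {real_of_int n..<real_of_int n + 1} \<xi>)"
proof -
  have U: "{- real K..<real K} = (\<Union>n\<in>{- int K..<int K}. {real_of_int n..<real_of_int n + 1})"
  proof (intro equalityI subsetI)
    fix x assume x: "x \<in> {- real K..<real K}"
    have "- int K \<le> \<lfloor>x\<rfloor>" using x by (simp add: le_floor_iff)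
    moreover have "\<lfloor>x\<rfloor> < int K" using x by (simp add: floor_less_iff)
    ultimately show "x \<in> (\<Union>n\<in>{- int K..<int K}. {real_of_int n..<real_of_int n + 1})"
      by (intro UN_I[of "\<lfloor>x\<rfloor>"]) auto
  next
    fix x assume "x \<in> (\<Union>n\<in>{- int K..<int K}. {real_of_int n..<real_of_int n + 1})"
    then obtain n where n: "- int K \<le> n" "n < int K" "real_of_int n \<le> x" "x < real_of_int n + 1" by auto
    have "- real K \<le> real_of_int n" using n(1) by linarith
    moreover have "real_of_int n + 1 \<le> real K" using n(2) by linarith
    ultimately show "x \<in> {- real K..<real K}" using n by auto
  qed
  have D: "disjoint_family_on (\<lambda>n. {real_of_int n..<real_of_int n + 1}) {- int K..<int K}"
  proof (unfold disjoint_family_on_def, intro ballI impI)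
    fix m n :: int assume "m \<noteq> n"
    show "{real_of_int m..<real_of_int m + 1} \<inter> {real_of_int n..<real_of_int n + 1} = {}"
    proof (rule ccontr)
      assume "{real_of_int m..<real_of_int m + 1} \<inter> {real_of_int n..<real_of_int n + 1} \<noteq> {}"
      then obtain x where "x \<in> {real_of_int m..<real_of_int m + 1} \<inter> {real_of_int n..<real_of_int n + 1}" by blast
      then have "real_of_int m \<le> x" "x < real_of_int m + 1" "real_of_int n \<le> x" "x < real_of_int n + 1" by auto
      then have "m < n + 1" "n < m + 1" by linarith+
      then show False using \<open>m \<noteq> n\<close> by linarith
    qed
  qed
  show ?thesis unfolding U by (rule indicator_UN_disjoint[OF _ D]) simp
qed

lemma planch:
  assumes f: "L2_half f"
  shows "(\<integral>\<^sup>+\<xi>. ennreal ((cmod (LINT x:II|lborel. f x * kern \<xi> x))\<^sup>2) \<partial>lborel) \<le> ennreal (NN f)"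
proof -
  define F where "F \<xi> = (LINT x:II|lborel. f x * kern \<xi> x)" for \<xi>
  define \<phi> where "\<phi> \<xi> = ennreal ((cmod (F \<xi>))\<^sup>2)" for \<xi>
  have fm [measurable]: "f \<in> borel_measurable borel" using f by (simp add: L2_half_def)
  have Fm: "F \<in> borel_measurable borel" unfolding F_def by (rule F_meas[OF f])
  have \<phi>m [measurable]: "\<phi> \<in> borel_measurable borel" unfolding \<phi>_def using Fm by measurable
  define g where "g t x = f x * kern t x" for t x
  have gm: "g t \<in> borel_measurable borel" for t
    unfolding g_def[abs_def] by measurable
  have Lg: "L2_half (g t)" for t
    by (rule L2_dom[OF gm f, where C=1]) (auto simp: g_def norm_mult)
  have NNg: "NN (g t) = NN f" for t unfolding NN_def g_def by (simp add: norm_mult)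
  have Fshift: "F (real_of_int n + t) = coef (g t) n" for n t
    unfolding F_def coef_def g_def by (simp add: kern_add mult.assoc)
  have bes: "(\<Sum>n\<in>A. \<phi> (real_of_int n + t)) \<le> ennreal (NN f)" if A: "finite A" for A t
  proof -
    have "(\<Sum>n\<in>A. \<phi> (real_of_int n + t)) = ennreal (\<Sum>n\<in>A. (cmod (coef (g t) n))\<^sup>2)"
      unfolding \<phi>_def Fshift by (rule sum_ennreal) simp
    also have "\<dots> \<le> ennreal (NN f)"
      using bessel[OF Lg A, of t] NNg[of t] by (intro ennreal_leI) simp
    finally show ?thesis .
  qed
  have stepK: "(\<integral>\<^sup>+\<xi>. indicator {- real K..<real K} \<xi> * \<phi> \<xi> \<partial>lborel) \<le> ennreal (NN f)" for K :: nat
  proof -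
    let ?A = "{- int K..<int K}"
    have "(\<integral>\<^sup>+\<xi>. indicator {- real K..<real K} \<xi> * \<phi> \<xi> \<partial>lborel)
        = (\<integral>\<^sup>+\<xi>. (\<Sum>n\<in>?A. indicator {real_of_int n..<real_of_int n + 1} \<xi> * \<phi> \<xi>) \<partial>lborel)"
      by (simp add: indicator_int_decomp sum_distrib_right)
    also have "\<dots> = (\<Sum>n\<in>?A. (\<integral>\<^sup>+\<xi>. indicator {real_of_int n..<real_of_int n + 1} \<xi> * \<phi> \<xi> \<partial>lborel))"
      by (rule nn_integral_sum) simp
    also have "\<dots> = (\<Sum>n\<in>?A. (\<integral>\<^sup>+t. indicator {0..<1} t * \<phi> (real_of_int n + t) \<partial>lborel))"
    proof (rule sum.cong[OF refl])
      fix n assume "n \<in> ?A"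
      have "(\<integral>\<^sup>+\<xi>. indicator {real_of_int n..<real_of_int n + 1} \<xi> * \<phi> \<xi> \<partial>lborel)
          = ennreal \<bar>1::real\<bar> * (\<integral>\<^sup>+t. indicator {real_of_int n..<real_of_int n + 1} (real_of_int n + 1 * t) * \<phi> (real_of_int n + 1 * t) \<partial>lborel)"
        by (rule nn_integral_real_affine) simp_all
      also have "\<dots> = (\<integral>\<^sup>+t. indicator {0..<1} t * \<phi> (real_of_int n + t) \<partial>lborel)"
        by (simp only: abs_one ennreal_1 mult_1_left) (intro nn_integral_cong, auto simp: indicator_def)
      finally show "(\<integral>\<^sup>+\<xi>. indicator {real_of_int n..<real_of_int n + 1} \<xi> * \<phi> \<xi> \<partial>lborel)
          = (\<integral>\<^sup>+t. indicator {0..<1} t * \<phi> (real_of_int n + t) \<partial>lborel)" .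
    qed
    also have "\<dots> = (\<integral>\<^sup>+t. indicator {0..<1} t * (\<Sum>n\<in>?A. \<phi> (real_of_int n + t)) \<partial>lborel)"
      by (subst nn_integral_sum[symmetric]) (simp_all add: sum_distrib_left)
    also have "\<dots> \<le> (\<integral>\<^sup>+t. indicator {0..<1::real} t * ennreal (NN f) \<partial>lborel)"
    proof (rule nn_integral_mono)
      fix t :: real
      show "indicator {0..<1} t * (\<Sum>n\<in>?A. \<phi> (real_of_int n + t)) \<le> indicator {0..<1} t * ennreal (NN f)"
        by (rule mult_left_mono[OF bes]) simp_all
    qed
    also have "\<dots> = ennreal (NN f)"
      by (subst mult.commute) (simp add: nn_integral_cmult_indicator)
    finally show ?thesis .
  qed
  have "(\<integral>\<^sup>+\<xi>. \<phi> \<xi> \<partial>lborel) = (\<integral>\<^sup>+\<xi>. (SUP K. indicator {- real K..<real K} \<xi> * \<phi> \<xi>) \<partial>lborel)"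
  proof (intro nn_integral_cong)
    fix \<xi> :: real
    show "\<phi> \<xi> = (SUP K. indicator {- real K..<real K} \<xi> * \<phi> \<xi>)"
    proof (rule antisym)
      obtain K :: nat where K: "\<bar>\<xi>\<bar> < real K" using reals_Archimedean2 by blast
      then have "\<phi> \<xi> = indicator {- real K..<real K} \<xi> * \<phi> \<xi>" by (auto simp: indicator_def)
      also have "\<dots> \<le> (SUP K. indicator {- real K..<real K} \<xi> * \<phi> \<xi>)" by (rule SUP_upper) simp
      finally show "\<phi> \<xi> \<le> (SUP K. indicator {- real K..<real K} \<xi> * \<phi> \<xi>)" .
      show "(SUP K. indicator {- real K..<real K} \<xi> * \<phi> \<xi>) \<le> \<phi> \<xi>"
        by (rule SUP_least) (auto simp: indicator_def)
    qed
  qed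
  also have "\<dots> = (SUP K. (\<integral>\<^sup>+\<xi>. indicator {- real K..<real K} \<xi> * \<phi> \<xi> \<partial>lborel))"
  proof (rule nn_integral_monotone_convergence_SUP)
    show "incseq (\<lambda>K \<xi>. indicator {- real K..<real K} \<xi> * \<phi> \<xi>)"
      by (intro incseq_SucI le_funI mult_right_mono) (auto simp: indicator_def)
    show "(\<lambda>\<xi>. indicator {- real K..<real K} \<xi> * \<phi> \<xi>) \<in> borel_measurable lborel" for K by simp
  qed
  also have "\<dots> \<le> ennreal (NN f)" by (rule SUP_least) (rule stepK)
  finally show ?thesis unfolding \<phi>_def F_def .
qed



lemma sum_int_even:
  fixes a :: "int \<Rightarrow> ennreal"
  assumes ev: "\<And>n. a (- n) = a n"
  shows "(\<Sum>\<^sub>\<infinity>n\<in>UNIV. a n) \<le> (\<Sum>\<^sub>\<infinity>n\<in>{n. n \<ge> 0}. a n) + (\<Sum>\<^sub>\<infinity>n\<in>{n. n \<ge> 0}. a n)"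
proof -
  have U: "(UNIV :: int set) = {n. n \<ge> 0} \<union> {n. n < 0}" by auto
  have "(\<Sum>\<^sub>\<infinity>n\<in>UNIV. a n) = (\<Sum>\<^sub>\<infinity>n\<in>{n. n \<ge> 0}. a n) + (\<Sum>\<^sub>\<infinity>n\<in>{n. n < 0}. a n)"
    by (subst U, rule infsum_Un_disjoint) (auto intro: nonneg_summable_on_complete)
  also have "(\<Sum>\<^sub>\<infinity>n\<in>{n. n < 0}. a n) = (\<Sum>\<^sub>\<infinity>n\<in>uminus ` {n::int. n > 0}. a n)"
  proof -
    have "{n::int. n < 0} = uminus ` {n::int. n > 0}"
      by (auto intro!: image_eqI[of _ uminus "- _"])
    then show ?thesis by simp
  qed
  also have "\<dots> = (\<Sum>\<^sub>\<infinity>n\<in>{n::int. n > 0}. (a \<circ> uminus) n)"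
    by (rule infsum_reindex) (simp add: inj_on_def)
  also have "\<dots> = (\<Sum>\<^sub>\<infinity>n\<in>{n::int. n > 0}. a n)" by (simp add: ev comp_def)
  also have "\<dots> \<le> (\<Sum>\<^sub>\<infinity>n\<in>{n. n \<ge> 0}. a n)"
    by (rule infsum_mono_neutral) (auto intro: nonneg_summable_on_complete)
  finally show ?thesis by (simp add: add_left_mono)
qed

theorem mainTheorem10:
  shows "\<exists>c::real. c > 0 \<and> (\<forall>F \<in> PW_even.
    (\<Sum>\<^sub>\<infinity>n\<in>{n::int. n \<ge> 0}. ennreal ((cmod (F (of_int n)))\<^sup>2))
    + (\<Sum>\<^sub>\<infinity>n\<in>{n::int. n < 0}.
         ennreal ((cmod ((-1 / (2 * pi * \<i>)) * vector_derivative F (at (of_int n))))\<^sup>2))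
    \<ge> ennreal c * (\<integral>\<^sup>+ x. ennreal ((cmod (F x))\<^sup>2) \<partial>lborel))"
proof (intro exI[of _ "1/2"] conjI ballI)
  show "(1/2::real) > 0" by simp
  fix F assume FE: "F \<in> PW_even"
  then obtain f where f: "L2_half f"
    and Fe: "\<And>\<xi>. F \<xi> = (LINT x:{-1/2..1/2}|lborel. f x * exp (- 2 * pi * \<i> * complex_of_real (\<xi> * x)))"
    unfolding PW_even_def PW_def by blast
  have even: "F x = F (- x)" for x using FE unfolding PW_even_def by blast
  have Fk: "F \<xi> = (LINT x:II|lborel. f x * kern \<xi> x)" for \<xi>
    unfolding kern_def by (rule Fe)
  define a where "a n = ennreal ((cmod (F (of_int n)))\<^sup>2)" for n :: int
  define Sp where "Sp = (\<Sum>\<^sub>\<infinity>n\<in>{n::int. n \<ge> 0}. a n)"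
  define Sm where "Sm = (\<Sum>\<^sub>\<infinity>n\<in>{n::int. n < 0}.
         ennreal ((cmod ((-1 / (2 * pi * \<i>)) * vector_derivative F (at (of_int n))))\<^sup>2))"
  have "(\<integral>\<^sup>+ x. ennreal ((cmod (F x))\<^sup>2) \<partial>lborel) = (\<integral>\<^sup>+\<xi>. ennreal ((cmod (LINT x:II|lborel. f x * kern \<xi> x))\<^sup>2) \<partial>lborel)"
    by (simp only: Fk)
  also have "\<dots> \<le> ennreal (NN f)" by (rule planch[OF f])
  also have "\<dots> \<le> (\<Sum>\<^sub>\<infinity>n\<in>UNIV. ennreal ((cmod (coef f n))\<^sup>2))" by (rule parseval_le[OF f])
  also have "\<dots> = (\<Sum>\<^sub>\<infinity>n\<in>UNIV. a n)"
    unfolding a_def coef_def Fk by simp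
  also have "\<dots> \<le> Sp + Sp"
    unfolding Sp_def by (rule sum_int_even) (simp add: a_def even[of "of_int _"])
  finally have I: "(\<integral>\<^sup>+ x. ennreal ((cmod (F x))\<^sup>2) \<partial>lborel) \<le> Sp + Sp" .
  have "ennreal (1/2) * (\<integral>\<^sup>+ x. ennreal ((cmod (F x))\<^sup>2) \<partial>lborel) \<le> ennreal (1/2) * (Sp + Sp)"
    by (rule mult_left_mono[OF I]) simp
  also have "ennreal (1/2) * (Sp + Sp) = Sp"
  proof -
    have "ennreal (1/2) * (Sp + Sp) = (ennreal (1/2) * 2) * Sp" by (simp add: mult_2 algebra_simps)
    also have "ennreal (1/2) * 2 = 1"
    proof -
      have "ennreal (1/2) * 2 = ennreal (1/2) * ennreal 2" by (simp only: ennreal_numeral)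
      also have "\<dots> = ennreal (1/2 * 2)" by (rule ennreal_mult[symmetric]) simp_all
      finally show ?thesis by simp
    qed
    finally show ?thesis by simp
  qed
  also have "Sp \<le> Sp + Sm" by simp
  finally show "ennreal (1/2) * (\<integral>\<^sup>+ x. ennreal ((cmod (F x))\<^sup>2) \<partial>lborel) \<le>
    (\<Sum>\<^sub>\<infinity>n\<in>{n::int. n \<ge> 0}. ennreal ((cmod (F (of_int n)))\<^sup>2))
    + (\<Sum>\<^sub>\<infinity>n\<in>{n::int. n < 0}.
         ennreal ((cmod ((-1 / (2 * pi * \<i>)) * vector_derivative F (at (of_int n))))\<^sup>2))"
    unfolding Sp_def Sm_def a_def .
qed


end
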